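(* Under the setting below, let $\Psi$ be the weak solution of the closed-loop system. There exist a sequence of times $t_n\nearrow\infty$ and $\Psi_\infty\in L^2(\mathbb{R}^N,\mathbb{C})$ with $\|\Psi_\infty\|_{L^2}\leq1$ such that $\Psi(t_n)\rightharpoonup\Psi_\infty$ weakly in $L^2(\mathbb{R}^N,\mathbb{C})$ and $\mathbb{P}_{\mathrm{disc}}\Psi(t_n)\to\mathbb{P}_{\mathrm{disc}}\Psi_\infty$ strongly in $L^2(\mathbb{R}^N,\mathbb{C})$.
   Context: Setting: $N\geq2$; $V$ satisfies decay assumption (A) (zero is neither an eigenvalue nor a resonance of $H_0=-\Delta+V$, and: ($N=2$) $|V(x)|\leq C(1+|x|)^{-3-\varepsilon}$; ($N=3$) $V\in L^{3/2-\varepsilon}\cap L^{3/2+\varepsilon}$; ($N\geq4$) $\widehat V\in L^1$ and $(1+|x|^2)^{\gamma/2}V$ bounded on $H^\nu$ for some $\nu>0,\gamma>N+4$); $\mu$ real-valued, $\mu\in\bigcup_{2\leq p<2N}L^p\cap L^\infty$; $\phi_0,\dots,\phi_M$ an orthonormal basis of eigenfunctions of the discrete subspace of $H_0$, eigenvalues $\lambda_j$; $\mathbb{P}_{\mathrm{disc}}\psi=\sum_{j=0}^M\langle\psi,\phi_j\rangle\phi_j$ with $\langle\xi,\zeta\rangle=\int\xi\bar\zeta$; $\Psi_0=\sum\alpha_j\phi_j$, $\|\Psi_0\|_{L^2}=1$, $\alpha_0\neq0$; the $\lambda_j$ pairwise different with non-degenerate differences $\lambda_{j_1}-\lambda_{k_1}\neq\lambda_{j_2}-\lambda_{k_2}$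 for $(j_1,k_1)\neq(j_2,k_2)$; $\langle\mu\phi_j,\phi_k\rangle\neq0$ for $j\neq k$. For $\epsilon,c>0$, $u_\epsilon(\Psi)=c[(1-\epsilon)\sum_{j}\Im(\langle\mu\Psi,\phi_j\rangle\langle\phi_j,\Psi\rangle)+\epsilon\Im(\langle\mu\Psi,\phi_0\rangle\langle\phi_0,\Psi\rangle)]$. Closed-loop system: $i\partial_t\Psi=-\Delta\Psi+(V-u_\epsilon(\Psi(t))\mu)\Psi$, $\Psi(0)=\Psi_0$; its weak solution is $\Psi\in C^0(\mathbb{R}^+,L^2)$ with unit norm satisfying the Duhamel formula $\Psi(t)=e^{-iH_0t}\Psi_0+i\int_0^te^{-iH_0(t-s)}u_\epsilon(\Psi(s))\mu\Psi(s)ds$. *)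

theory Defs
  imports "HOL-Analysis.Analysis"
begin

text \<open>Functions on R^N are modelled as maps real^'n => complex; the dimension is N = CARD('n).
  Elements of L^2 are represented by square-integrable functions; equality in L^2 means
  that the L^2 norm of the difference vanishes.\<close>

definition L2 :: "(real^'n::finite \<Rightarrow> complex) \<Rightarrow> bool" where
  "L2 f \<longleftrightarrow> f \<in> borel_measurable lborel \<and> integrable lborel (\<lambda>x. (cmod (f x))\<^sup>2)"

definition l2_inner :: "(real^'n \<Rightarrow> complex) \<Rightarrow> (real^'n \<Rightarrow> complex) \<Rightarrow> complex" where
  "l2_inner f g = (\<integral>x. f x * cnj (g x) \<partial>lborel)"

definition l2_norm :: "(real^'n \<Rightarrow> complex) \<Rightarrow> real" where
  "l2_norm f = sqrt (\<integral>x. (cmod (f x))\<^sup>2 \<partial>lborel)"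

definition Lp_fun :: "real \<Rightarrow> ('a::euclidean_space \<Rightarrow> 'b::real_normed_vector) \<Rightarrow> bool" where
  "Lp_fun p f \<longleftrightarrow> f \<in> borel_measurable lborel \<and> integrable lborel (\<lambda>x. norm (f x) powr p)"

definition Linf_fun :: "('a::euclidean_space \<Rightarrow> 'b::real_normed_vector) \<Rightarrow> bool" where
  "Linf_fun f \<longleftrightarrow> f \<in> borel_measurable lborel \<and> (\<exists>C. AE x in lborel. norm (f x) \<le> C)"

definition pd :: "'n \<Rightarrow> (real^'n \<Rightarrow> complex) \<Rightarrow> real^'n \<Rightarrow> complex" where
  "pd i f = (\<lambda>x. frechet_derivative f (at x) (axis i 1))"

fun pds :: "'n list \<Rightarrow> (real^'n \<Rightarrow> complex) \<Rightarrow> real^'n \<Rightarrow> complex" where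
  "pds [] f = f"
| "pds (i # ks) f = pd i (pds ks f)"

definition laplacian :: "(real^'n::finite \<Rightarrow> complex) \<Rightarrow> real^'n \<Rightarrow> complex" where
  "laplacian f = (\<lambda>x. \<Sum>i\<in>UNIV. pd i (pd i f) x)"

definition test_fun :: "(real^'n::finite \<Rightarrow> complex) \<Rightarrow> bool" where
  "test_fun \<theta> \<longleftrightarrow> compact (closure {x. \<theta> x \<noteq> 0}) \<and>
     (\<forall>ks. continuous_on UNIV (pds ks \<theta>) \<and> (\<forall>x. pds ks \<theta> differentiable at x))"

definition has_weak_grad :: "(real^'n::finite \<Rightarrow> complex) \<Rightarrow> ('n \<Rightarrow> real^'n \<Rightarrow> complex) \<Rightarrow> bool" where
  "has_weak_grad \<psi> g \<longleftrightarrow> (\<forall>i. L2 (g i) \<and>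
     (\<forall>\<theta>. test_fun \<theta> \<longrightarrow> (\<integral>x. \<psi> x * pd i \<theta> x \<partial>lborel) = - (\<integral>x. g i x * \<theta> x \<partial>lborel)))"

definition H0_form :: "(real^'n::finite \<Rightarrow> real) \<Rightarrow> (real^'n \<Rightarrow> complex) \<Rightarrow> ('n \<Rightarrow> real^'n \<Rightarrow> complex)
    \<Rightarrow> (real^'n \<Rightarrow> complex) \<Rightarrow> complex" where
  "H0_form V \<psi> g \<theta> = (\<Sum>i\<in>UNIV. \<integral>x. g i x * cnj (pd i \<theta> x) \<partial>lborel)
      + (\<integral>x. complex_of_real (V x) * \<psi> x * cnj (\<theta> x) \<partial>lborel)"

text \<open>U is the unitary group e^{-i H_0 t} generated by the self-adjoint (form-defined) operator
  H_0 = -Delta + V: a strongly continuous unitary group on L^2 whose generator -iA satisfies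
  A \<subseteq> H_0. Since both are self-adjoint, A = H_0, so U is uniquely determined.\<close>

definition is_propagator :: "(real^'n::finite \<Rightarrow> real) \<Rightarrow> (real \<Rightarrow> (real^'n \<Rightarrow> complex) \<Rightarrow> (real^'n \<Rightarrow> complex)) \<Rightarrow> bool" where
  "is_propagator V U \<longleftrightarrow>
     (\<forall>t \<psi>. L2 \<psi> \<longrightarrow> L2 (U t \<psi>) \<and> l2_norm (U t \<psi>) = l2_norm \<psi>) \<and>
     (\<forall>t \<psi> \<phi>. L2 \<psi> \<longrightarrow> L2 \<phi> \<longrightarrow> l2_norm (\<lambda>x. \<psi> x - \<phi> x) = 0 \<longrightarrow>
         l2_norm (\<lambda>x. U t \<psi> x - U t \<phi> x) = 0) \<and>
     (\<forall>t \<psi> \<phi> a. L2 \<psi> \<longrightarrow> L2 \<phi> \<longrightarrow>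
         l2_norm (\<lambda>x. U t (\<lambda>y. \<psi> y + a * \<phi> y) x - (U t \<psi> x + a * U t \<phi> x)) = 0) \<and>
     (\<forall>\<psi>. L2 \<psi> \<longrightarrow> l2_norm (\<lambda>x. U 0 \<psi> x - \<psi> x) = 0) \<and>
     (\<forall>s t \<psi>. L2 \<psi> \<longrightarrow> l2_norm (\<lambda>x. U (s + t) \<psi> x - U s (U t \<psi>) x) = 0) \<and>
     (\<forall>\<psi> t0. L2 \<psi> \<longrightarrow> ((\<lambda>t. l2_norm (\<lambda>x. U t \<psi> x - U t0 \<psi> x)) \<longlongrightarrow> 0) (at t0)) \<and>
     (\<forall>\<psi> \<eta>. L2 \<psi> \<longrightarrow> L2 \<eta> \<longrightarrow>
         ((\<lambda>h. l2_norm (\<lambda>x. (U h \<psi> x - \<psi> x) / complex_of_real h + \<i> * \<eta> x)) \<longlongrightarrow> 0) (at 0) \<longrightarrow>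
         (\<exists>g. has_weak_grad \<psi> g \<and> (\<forall>\<theta>. test_fun \<theta> \<longrightarrow> H0_form V \<psi> g \<theta> = l2_inner \<eta> \<theta>)))"

text \<open>Eigenfunctions of H_0: H_0 phi = lambda phi, i.e. e^{-iH_0 t} phi = e^{-i lambda t} phi.\<close>

definition is_eigenfunction :: "(real \<Rightarrow> (real^'n::finite \<Rightarrow> complex) \<Rightarrow> (real^'n \<Rightarrow> complex))
    \<Rightarrow> real \<Rightarrow> (real^'n \<Rightarrow> complex) \<Rightarrow> bool" where
  "is_eigenfunction U lam \<phi> \<longleftrightarrow> L2 \<phi> \<and> l2_norm \<phi> \<noteq> 0 \<and>
     (\<forall>t. l2_norm (\<lambda>x. U t \<phi> x - exp (- \<i> * complex_of_real (lam * t)) * \<phi> x) = 0)"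

definition zero_energy_solution :: "(real^'n::finite \<Rightarrow> real) \<Rightarrow> (real^'n \<Rightarrow> complex) \<Rightarrow> bool" where
  "zero_energy_solution V \<psi> \<longleftrightarrow> \<psi> \<in> borel_measurable lborel \<and>
     (\<forall>\<theta>. test_fun \<theta> \<longrightarrow>
        integrable lborel (\<lambda>x. \<psi> x * laplacian \<theta> x) \<and>
        integrable lborel (\<lambda>x. complex_of_real (V x) * \<psi> x * \<theta> x) \<and>
        (\<integral>x. - \<psi> x * laplacian \<theta> x + complex_of_real (V x) * \<psi> x * \<theta> x \<partial>lborel) = 0)"

definition jbr :: "real^'n \<Rightarrow> real" where
  "jbr x = sqrt (1 + (norm x)\<^sup>2)"

definition resonance_class :: "(real^'n::finite \<Rightarrow> complex) \<Rightarrow> bool" where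
  "resonance_class \<psi> \<longleftrightarrow>
     (if CARD('n) = 2 then Linf_fun \<psi>
      else if CARD('n) = 3 then (\<forall>s>1/2. L2 (\<lambda>x. complex_of_real (jbr x powr (-s)) * \<psi> x))
      else if CARD('n) = 4 then (\<forall>s>0. L2 (\<lambda>x. complex_of_real (jbr x powr (-s)) * \<psi> x))
      else L2 \<psi>)"

definition zero_regular :: "(real^'n::finite \<Rightarrow> real) \<Rightarrow> bool" where
  "zero_regular V \<longleftrightarrow>
     (\<forall>\<psi>. zero_energy_solution V \<psi> \<and> (L2 \<psi> \<or> resonance_class \<psi>) \<longrightarrow>
        (AE x in lborel. \<psi> x = 0))"

text \<open>Fourier transform (of integrable functions) and Sobolev norms H^nu (defined by duality
  against test functions, up to a harmless constant factor).\<close>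

definition fourier :: "(real^'n::finite \<Rightarrow> complex) \<Rightarrow> real^'n \<Rightarrow> complex" where
  "fourier f \<xi> = (\<integral>x. f x * exp (- \<i> * complex_of_real (x \<bullet> \<xi>)) \<partial>lborel)"

definition sob_dual_norm :: "real \<Rightarrow> (real^'n::finite \<Rightarrow> complex) \<Rightarrow> real" where
  "sob_dual_norm \<nu> \<theta> = sqrt (\<integral>\<xi>. (1 + (norm \<xi>)\<^sup>2) powr (- \<nu>) * (cmod (fourier \<theta> \<xi>))\<^sup>2 \<partial>lborel)"

definition hnorm :: "real \<Rightarrow> (real^'n::finite \<Rightarrow> complex) \<Rightarrow> ereal" where
  "hnorm \<nu> f = (SUP \<theta>\<in>{\<theta>. test_fun \<theta> \<and> sob_dual_norm \<nu> \<theta> \<noteq> 0}.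
                  ereal (cmod (\<integral>x. f x * cnj (\<theta> x) \<partial>lborel) / sob_dual_norm \<nu> \<theta>))"

definition fourier_transform_L1 :: "(real^'n::finite \<Rightarrow> real) \<Rightarrow> bool" where
  "fourier_transform_L1 V \<longleftrightarrow> (\<exists>g. integrable lborel g \<and>
     (\<forall>\<theta>. test_fun \<theta> \<longrightarrow> integrable lborel (\<lambda>x. complex_of_real (V x) * fourier \<theta> x) \<and>
        (\<integral>x. complex_of_real (V x) * fourier \<theta> x \<partial>lborel) = (\<integral>\<xi>. g \<xi> * \<theta> \<xi> \<partial>lborel)))"

definition mult_bounded_Hs :: "real \<Rightarrow> (real^'n::finite \<Rightarrow> real) \<Rightarrow> bool" where
  "mult_bounded_Hs \<nu> W \<longleftrightarrow> (\<exists>C::real. \<forall>\<theta>. test_fun \<theta> \<longrightarrow>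
       hnorm \<nu> (\<lambda>x. complex_of_real (W x) * \<theta> x) \<le> ereal C * hnorm \<nu> \<theta>)"

definition decay_A :: "(real^'n::finite \<Rightarrow> real) \<Rightarrow> bool" where
  "decay_A V \<longleftrightarrow> V \<in> borel_measurable lborel \<and>
     (if CARD('n) = 2 then (\<exists>C \<epsilon>. \<epsilon> > 0 \<and> (\<forall>x. \<bar>V x\<bar> \<le> C * (1 + norm x) powr (-3 - \<epsilon>)))
      else if CARD('n) = 3 then (\<exists>\<epsilon>. 0 < \<epsilon> \<and> \<epsilon> < 1/2 \<and> Lp_fun (3/2 - \<epsilon>) V \<and> Lp_fun (3/2 + \<epsilon>) V)
      else fourier_transform_L1 V \<and>
           (\<exists>\<nu> \<gamma>. \<nu> > 0 \<and> \<gamma> > real CARD('n) + 4 \<and>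
               mult_bounded_Hs \<nu> (\<lambda>x. (1 + (norm x)\<^sup>2) powr (\<gamma> / 2) * V x)))"

definition P_disc :: "nat \<Rightarrow> (nat \<Rightarrow> real^'n \<Rightarrow> complex) \<Rightarrow> (real^'n \<Rightarrow> complex) \<Rightarrow> real^'n \<Rightarrow> complex" where
  "P_disc M \<phi> \<psi> = (\<lambda>x. \<Sum>j\<le>M. l2_inner \<psi> (\<phi> j) * \<phi> j x)"

definition u_ctrl :: "real \<Rightarrow> real \<Rightarrow> nat \<Rightarrow> (nat \<Rightarrow> real^'n \<Rightarrow> complex) \<Rightarrow> (real^'n \<Rightarrow> real)
    \<Rightarrow> (real^'n \<Rightarrow> complex) \<Rightarrow> real" where
  "u_ctrl c \<epsilon> M \<phi> \<mu> \<Psi> = c * ((1 - \<epsilon>) *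
       (\<Sum>j\<le>M. Im (l2_inner (\<lambda>x. complex_of_real (\<mu> x) * \<Psi> x) (\<phi> j) * l2_inner (\<phi> j) \<Psi>))
     + \<epsilon> * Im (l2_inner (\<lambda>x. complex_of_real (\<mu> x) * \<Psi> x) (\<phi> 0) * l2_inner (\<phi> 0) \<Psi>))"

text \<open>Weak solution of the closed-loop system on R^+ (Duhamel formula, tested weakly).\<close>

definition weak_solution :: "(real \<Rightarrow> (real^'n::finite \<Rightarrow> complex) \<Rightarrow> (real^'n \<Rightarrow> complex))
    \<Rightarrow> ((real^'n \<Rightarrow> complex) \<Rightarrow> real) \<Rightarrow> (real^'n \<Rightarrow> real) \<Rightarrow> (real^'n \<Rightarrow> complex)
    \<Rightarrow> (real \<Rightarrow> real^'n \<Rightarrow> complex) \<Rightarrow> bool" where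
  "weak_solution U u \<mu> \<Psi>0 \<Psi> \<longleftrightarrow>
     (\<forall>t\<ge>0. L2 (\<Psi> t) \<and> l2_norm (\<Psi> t) = 1) \<and>
     (\<forall>t0\<ge>0. ((\<lambda>t. l2_norm (\<lambda>x. \<Psi> t x - \<Psi> t0 x)) \<longlongrightarrow> 0) (at t0 within {0..})) \<and>
     (\<forall>t\<ge>0. \<forall>g. L2 g \<longrightarrow>
        l2_inner (\<Psi> t) g = l2_inner (U t \<Psi>0) g
          + \<i> * integral {0..t} (\<lambda>s. complex_of_real (u (\<Psi> s)) *
                 l2_inner (U (t - s) (\<lambda>x. complex_of_real (\<mu> x) * \<Psi> s x)) g))"

end

theory Submission
  imports Defs "HOL-Library.Diagonal_Subsequence"
begin

type_synonym 'n fn = "real^'n \<Rightarrow> complex"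

lemma borel_measurable_cnj'[measurable]:
  "f \<in> borel_measurable M \<Longrightarrow> (\<lambda>x. cnj (f x)) \<in> borel_measurable M"
  by (rule borel_measurable_continuous_on[where f=cnj]) (auto intro: continuous_intros)

lemma L2_meas: "L2 f \<Longrightarrow> f \<in> borel_measurable lborel" by (simp add: L2_def)
lemma L2_int: "L2 f \<Longrightarrow> integrable lborel (\<lambda>x. (cmod (f x))\<^sup>2)" by (simp add: L2_def)

lemma L2_zero: "L2 (\<lambda>x. 0)" by (simp add: L2_def)

lemma sq_tri: "(cmod (a + b))\<^sup>2 \<le> 2 * (cmod a)\<^sup>2 + 2 * (cmod b)\<^sup>2" for a b :: complex
proof -
  have "cmod (a+b) \<le> cmod a + cmod b" by (rule norm_triangle_ineq)
  hence "(cmod (a + b))\<^sup>2 \<le> (cmod a + cmod b)\<^sup>2" by (simp add: power_mono)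
  also have "\<dots> \<le> 2 * (cmod a)\<^sup>2 + 2 * (cmod b)\<^sup>2"
  proof -
    have "0 \<le> (cmod a - cmod b)\<^sup>2" by simp
    thus ?thesis by (simp add: power2_eq_square algebra_simps)
  qed
  finally show ?thesis .
qed

lemma L2_add:
  assumes "L2 f" "L2 g" shows "L2 (\<lambda>x. f x + g x)"
proof -
  have [measurable]: "f \<in> borel_measurable lborel" "g \<in> borel_measurable lborel"
    using assms by (auto simp: L2_def)
  have i: "integrable lborel (\<lambda>x. 2 * (cmod (f x))\<^sup>2 + 2 * (cmod (g x))\<^sup>2)"
    using assms by (auto simp: L2_def)
  have "integrable lborel (\<lambda>x. (cmod (f x + g x))\<^sup>2)"
    apply (rule Bochner_Integration.integrable_bound[OF i])
     apply measurable
    apply (rule AE_I2)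
    using sq_tri by (simp add: abs_le_iff)
  thus ?thesis unfolding L2_def by simp
qed

lemma L2_cmult:
  assumes "L2 f" shows "L2 (\<lambda>x. a * f x)"
proof -
  have [measurable]: "f \<in> borel_measurable lborel" using assms by (auto simp: L2_def)
  have "integrable lborel (\<lambda>x. (cmod a)\<^sup>2 * (cmod (f x))\<^sup>2)" using assms by (auto simp: L2_def)
  thus ?thesis unfolding L2_def by (simp add: norm_mult power_mult_distrib)
qed

lemma L2_neg: "L2 f \<Longrightarrow> L2 (\<lambda>x. - f x)"
  using L2_cmult[of f "-1"] by simp

lemma L2_diff: "L2 f \<Longrightarrow> L2 g \<Longrightarrow> L2 (\<lambda>x. f x - g x)"
  using L2_add[of f "\<lambda>x. - g x"] L2_neg[of g] by simp

lemma L2_sum: "finite A \<Longrightarrow> (\<And>k. k \<in> A \<Longrightarrow> L2 (f k)) \<Longrightarrow> L2 (\<lambda>x. \<Sum>k\<in>A. f k x)"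
proof (induction A rule: finite_induct)
  case empty
  then show ?case by (simp add: L2_zero)
next
  case (insert k A)
  have "L2 (\<lambda>x. f k x + (\<Sum>k\<in>A. f k x))"
    by (rule L2_add) (use insert in auto)
  then show ?case using insert by simp
qed

lemma L2_prod_int:
  assumes "L2 f" "L2 g" shows "integrable lborel (\<lambda>x. cmod (f x) * cmod (g x))"
proof -
  have [measurable]: "f \<in> borel_measurable lborel" "g \<in> borel_measurable lborel"
    using assms by (auto simp: L2_def)
  have i: "integrable lborel (\<lambda>x. (cmod (f x))\<^sup>2 + (cmod (g x))\<^sup>2)"
    using assms by (auto simp: L2_def)
  have b: "cmod a * cmod b \<le> (cmod a)\<^sup>2 + (cmod b)\<^sup>2" for a b :: complex
  proof -
    have "0 \<le> (cmod a - cmod b)\<^sup>2" by simp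
    hence "2 * (cmod a * cmod b) \<le> (cmod a)\<^sup>2 + (cmod b)\<^sup>2"
      by (simp add: power2_eq_square algebra_simps)
    moreover have "0 \<le> cmod a * cmod b" by simp
    ultimately show ?thesis by linarith
  qed
  show ?thesis
    by (rule Bochner_Integration.integrable_bound[OF i]) (auto simp: b abs_mult)
qed

lemma L2_inner_int:
  assumes "L2 f" "L2 g" shows "integrable lborel (\<lambda>x. f x * cnj (g x))"
proof -
  have [measurable]: "f \<in> borel_measurable lborel" "g \<in> borel_measurable lborel"
    using assms by (auto simp: L2_def)
  show ?thesis
    by (rule Bochner_Integration.integrable_bound[OF L2_prod_int[OF assms]]) (measurable, simp add: norm_mult)
qed

lemma l2_norm_sq: "(l2_norm f)\<^sup>2 = (\<integral>x. (cmod (f x))\<^sup>2 \<partial>lborel)"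
  unfolding l2_norm_def by (simp add: integral_nonneg_AE)

lemma l2_norm_nonneg: "l2_norm f \<ge> 0"
  unfolding l2_norm_def by simp

lemma amgm_aux:
  fixes X A B :: real
  assumes "A \<ge> 0" "B \<ge> 0" "\<And>s. s > 0 \<Longrightarrow> X \<le> s * A + B / s"
  shows "X \<le> 2 * sqrt A * sqrt B"
proof (cases "A > 0 \<and> B > 0")
  case True
  define s where "s = sqrt B / sqrt A"
  have sA: "sqrt A > 0" "sqrt B > 0" using True by auto
  have s0: "s > 0" using sA by (simp add: s_def)
  have e1: "s * A = sqrt A * sqrt B"
  proof -
    have "s * A = sqrt B / sqrt A * (sqrt A * sqrt A)" using assms(1) by (simp add: s_def)
    also have "\<dots> = sqrt A * sqrt B" using sA by (simp add: field_simps)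
    finally show ?thesis .
  qed
  have e2: "B / s = sqrt A * sqrt B"
  proof -
    have "B / s = (sqrt B * sqrt B) / (sqrt B / sqrt A)" using assms(2) by (simp add: s_def)
    also have "\<dots> = sqrt A * sqrt B" using sA by (simp add: field_simps)
    finally show ?thesis .
  qed
  show ?thesis using assms(3)[OF s0] e1 e2 by simp
next
  case False
  have "X \<le> 0"
  proof (rule ccontr)
    assume "\<not> X \<le> 0"
    then have X: "X > 0" by simp
    define s where "s = (if A = 0 then (B + 1) / X else X / (2 * (A + 1)))"
    have s: "s > 0" using X assms by (simp add: s_def)
    have "X \<le> s * A + B / s" using assms(3)[OF s] .
    moreover have "s * A + B / s < X"
    proof (cases "A = 0")
      case True
      have "B / s = B * X / (B + 1)" using X assms True by (simp add: s_def)
      also have "\<dots> < X" using X assms by (simp add: divide_less_eq)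
      finally show ?thesis using True by simp
    next
      case False
      hence B: "B = 0" using \<open>\<not> (A > 0 \<and> B > 0)\<close> assms by auto
      have "s * A = X * (A / (2 * (A + 1)))" using False by (simp add: s_def)
      also have "\<dots> < X * 1"
        by (rule mult_strict_left_mono) (use X assms in \<open>auto simp: divide_less_eq\<close>)
      finally show ?thesis using B by simp
    qed
    ultimately show False by simp
  qed
  moreover have "0 \<le> 2 * sqrt A * sqrt B" using assms by simp
  ultimately show ?thesis by linarith
qed

lemma L2_CS_real:
  assumes "L2 f" "L2 g"
  shows "(\<integral>x. cmod (f x) * cmod (g x) \<partial>lborel) \<le> l2_norm f * l2_norm g"
proof -
  let ?A = "\<integral>x. (cmod (f x))\<^sup>2 \<partial>lborel" and ?B = "\<integral>x. (cmod (g x))\<^sup>2 \<partial>lborel"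
  have A: "?A \<ge> 0" "?B \<ge> 0" by (simp_all add: integral_nonneg_AE)
  have "(\<integral>x. cmod (f x) * cmod (g x) \<partial>lborel) \<le> (s * ?A + ?B / s) / 2" if s: "s > 0" for s
  proof -
    have pt: "cmod a * cmod b \<le> (s * (cmod a)\<^sup>2 + (cmod b)\<^sup>2 / s) / 2" for a b :: complex
    proof -
      have "0 \<le> (s * cmod a - cmod b)\<^sup>2" by simp
      hence "2 * s * (cmod a * cmod b) \<le> s\<^sup>2 * (cmod a)\<^sup>2 + (cmod b)\<^sup>2"
        by (simp add: power2_eq_square algebra_simps)
      thus ?thesis using s by (simp add: field_simps power2_eq_square)
    qed
    have "(\<integral>x. cmod (f x) * cmod (g x) \<partial>lborel) \<le> (\<integral>x. (s * (cmod (f x))\<^sup>2 + (cmod (g x))\<^sup>2 / s) / 2 \<partial>lborel)"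
      apply (rule integral_mono)
      using assms apply (auto simp: L2_def intro: L2_prod_int)[2]
      by (rule pt)
    also have "\<dots> = (s * ?A + ?B / s) / 2"
      using assms by (simp add: L2_def)
    finally show ?thesis .
  qed
  hence "(\<integral>x. cmod (f x) * cmod (g x) \<partial>lborel) \<le> 2 * sqrt ?A * sqrt ?B / 2"
    using amgm_aux[OF A, of "2 * (\<integral>x. cmod (f x) * cmod (g x) \<partial>lborel)"] by (simp add: field_simps)
  thus ?thesis by (simp add: l2_norm_def)
qed



lemma l2_inner_add_left:
  assumes "L2 f" "L2 g" "L2 h"
  shows "l2_inner (\<lambda>x. f x + g x) h = l2_inner f h + l2_inner g h"
  unfolding l2_inner_def
  using L2_inner_int[OF assms(1,3)] L2_inner_int[OF assms(2,3)]
  by (simp add: distrib_right)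

lemma l2_inner_cmult_left: "l2_inner (\<lambda>x. a * f x) h = a * l2_inner f h"
  unfolding l2_inner_def by (simp add: mult.assoc)

lemma l2_inner_cnj: "cnj (l2_inner f g) = l2_inner g f"
proof -
  have "cnj (\<integral>x. f x * cnj (g x) \<partial>lborel) = (\<integral>x. cnj (f x * cnj (g x)) \<partial>lborel)"
    by (rule Bochner_Integration.integral_cnj[symmetric])
  also have "\<dots> = (\<integral>x. g x * cnj (f x) \<partial>lborel)" by (simp add: mult.commute)
  finally show ?thesis unfolding l2_inner_def .
qed

lemma l2_inner_sum_left:
  assumes "finite A" "\<And>k. k \<in> A \<Longrightarrow> L2 (f k)" "L2 h"
  shows "l2_inner (\<lambda>x. \<Sum>k\<in>A. a k * f k x) h = (\<Sum>k\<in>A. a k * l2_inner (f k) h)"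
  using assms
proof (induction A rule: finite_induct)
  case empty
  then show ?case by (simp add: l2_inner_def)
next
  case (insert k A)
  have "l2_inner (\<lambda>x. \<Sum>k\<in>insert k A. a k * f k x) h
      = l2_inner (\<lambda>x. a k * f k x + (\<Sum>k\<in>A. a k * f k x)) h"
    using insert by simp
  also have "\<dots> = l2_inner (\<lambda>x. a k * f k x) h + l2_inner (\<lambda>x. \<Sum>k\<in>A. a k * f k x) h"
    apply (rule l2_inner_add_left)
      apply (rule L2_cmult) using insert apply simp
     apply (rule L2_sum) using insert by (auto intro: L2_cmult)
  finally show ?case using insert by (simp add: l2_inner_cmult_left)
qed

lemma l2_inner_sum_right:
  assumes "finite A" "\<And>k. k \<in> A \<Longrightarrow> L2 (f k)" "L2 h"
  shows "l2_inner h (\<lambda>x. \<Sum>k\<in>A. a k * f k x) = (\<Sum>k\<in>A. cnj (a k) * l2_inner h (f k))"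
proof -
  have "l2_inner h (\<lambda>x. \<Sum>k\<in>A. a k * f k x) = cnj (l2_inner (\<lambda>x. \<Sum>k\<in>A. a k * f k x) h)"
    by (simp add: l2_inner_cnj)
  also have "\<dots> = cnj (\<Sum>k\<in>A. a k * l2_inner (f k) h)"
    by (simp add: l2_inner_sum_left[OF assms])
  also have "\<dots> = (\<Sum>k\<in>A. cnj (a k) * l2_inner h (f k))"
    by (simp add: l2_inner_cnj)
  finally show ?thesis .
qed

lemma l2_inner_diff_left:
  assumes "L2 f" "L2 g" "L2 h"
  shows "l2_inner (\<lambda>x. f x - g x) h = l2_inner f h - l2_inner g h"
  unfolding l2_inner_def
  using L2_inner_int[OF assms(1,3)] L2_inner_int[OF assms(2,3)]
  by (simp add: left_diff_distrib)

lemma l2_inner_self: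
  assumes "L2 f" shows "l2_inner f f = complex_of_real ((l2_norm f)\<^sup>2)"
proof -
  have "l2_inner f f = (\<integral>x. complex_of_real ((cmod (f x))\<^sup>2) \<partial>lborel)"
    unfolding l2_inner_def by (simp only: complex_norm_square)
  also have "\<dots> = complex_of_real (\<integral>x. (cmod (f x))\<^sup>2 \<partial>lborel)"
    by (rule integral_complex_of_real)
  finally show ?thesis by (simp add: l2_norm_sq)
qed

lemma inner_CS:
  assumes "L2 f" "L2 g" shows "cmod (l2_inner f g) \<le> l2_norm f * l2_norm g"
proof -
  have "cmod (l2_inner f g) \<le> (\<integral>x. cmod (f x * cnj (g x)) \<partial>lborel)"
    unfolding l2_inner_def by (rule integral_norm_bound)
  also have "\<dots> = (\<integral>x. cmod (f x) * cmod (g x) \<partial>lborel)" by (simp add: norm_mult)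
  also have "\<dots> \<le> l2_norm f * l2_norm g" by (rule L2_CS_real[OF assms])
  finally show ?thesis .
qed

lemma l2_norm_zero_inner:
  assumes "L2 f" "L2 g" "l2_norm f = 0" shows "l2_inner f g = 0"
  using inner_CS[OF assms(1,2)] assms(3) by simp

lemma l2_norm_triangle:
  assumes "L2 f" "L2 g"
  shows "l2_norm (\<lambda>x. f x + g x) \<le> l2_norm f + l2_norm g"
proof -
  have [measurable]: "f \<in> borel_measurable lborel" "g \<in> borel_measurable lborel"
    using assms by (auto simp: L2_def)
  have i1: "integrable lborel (\<lambda>x. (cmod (f x + g x))\<^sup>2)"
    using L2_add[OF assms] by (simp add: L2_def)
  have i2: "integrable lborel (\<lambda>x. (cmod (f x))\<^sup>2 + 2 * (cmod (f x) * cmod (g x)) + (cmod (g x))\<^sup>2)"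
    using assms L2_prod_int[OF assms] by (auto simp: L2_def)
  have pt: "(cmod (a + b))\<^sup>2 \<le> (cmod a)\<^sup>2 + 2 * (cmod a * cmod b) + (cmod b)\<^sup>2" for a b :: complex
  proof -
    have "cmod (a+b) \<le> cmod a + cmod b" by (rule norm_triangle_ineq)
    hence "(cmod (a + b))\<^sup>2 \<le> (cmod a + cmod b)\<^sup>2" by (simp add: power_mono)
    thus ?thesis by (simp add: power2_eq_square algebra_simps)
  qed
  have "(l2_norm (\<lambda>x. f x + g x))\<^sup>2 = (\<integral>x. (cmod (f x + g x))\<^sup>2 \<partial>lborel)" by (rule l2_norm_sq)
  also have "\<dots> \<le> (\<integral>x. (cmod (f x))\<^sup>2 + 2 * (cmod (f x) * cmod (g x)) + (cmod (g x))\<^sup>2 \<partial>lborel)"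
    apply (rule integral_mono[OF i1 i2]) by (rule pt)
  also have "\<dots> = (l2_norm f)\<^sup>2 + 2 * (\<integral>x. cmod (f x) * cmod (g x) \<partial>lborel) + (l2_norm g)\<^sup>2"
    using assms L2_prod_int[OF assms] by (simp add: L2_def l2_norm_sq)
  also have "\<dots> \<le> (l2_norm f)\<^sup>2 + 2 * (l2_norm f * l2_norm g) + (l2_norm g)\<^sup>2"
    using L2_CS_real[OF assms] by simp
  also have "\<dots> = (l2_norm f + l2_norm g)\<^sup>2" by (simp add: power2_eq_square algebra_simps)
  finally show ?thesis
    by (rule power2_le_imp_le) (simp add: l2_norm_nonneg)
qed

lemma l2_norm_cmult: "l2_norm (\<lambda>x. a * f x) = cmod a * l2_norm f"
proof -
  have "(\<integral>x. (cmod (a * f x))\<^sup>2 \<partial>lborel) = (cmod a)\<^sup>2 * (\<integral>x. (cmod (f x))\<^sup>2 \<partial>lborel)"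
    by (simp add: norm_mult power_mult_distrib)
  thus ?thesis unfolding l2_norm_def by (simp add: real_sqrt_mult)
qed

lemma l2_norm_commute: "l2_norm (\<lambda>x. f x - g x) = l2_norm (\<lambda>x. g x - f x)"
  unfolding l2_norm_def by (simp add: norm_minus_commute)

lemma l2_norm_sum:
  assumes "finite A" "\<And>k. k \<in> A \<Longrightarrow> L2 (f k)"
  shows "l2_norm (\<lambda>x. \<Sum>k\<in>A. f k x) \<le> (\<Sum>k\<in>A. l2_norm (f k))"
  using assms
proof (induction A rule: finite_induct)
  case empty
  then show ?case by (simp add: l2_norm_def)
next
  case (insert k A)
  have "l2_norm (\<lambda>x. \<Sum>k\<in>insert k A. f k x) = l2_norm (\<lambda>x. f k x + (\<Sum>k\<in>A. f k x))"
    using insert by simp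
  also have "\<dots> \<le> l2_norm (f k) + l2_norm (\<lambda>x. \<Sum>k\<in>A. f k x)"
    by (rule l2_norm_triangle) (use insert in \<open>auto intro: L2_sum\<close>)
  also have "\<dots> \<le> l2_norm (f k) + (\<Sum>k\<in>A. l2_norm (f k))"
    using insert by simp
  finally show ?case using insert by simp
qed

lemma l2_norm_diff_triangle:
  assumes "L2 f" "L2 g" "L2 h"
  shows "l2_norm (\<lambda>x. f x - h x) \<le> l2_norm (\<lambda>x. f x - g x) + l2_norm (\<lambda>x. g x - h x)"
proof -
  have "l2_norm (\<lambda>x. f x - h x) = l2_norm (\<lambda>x. (f x - g x) + (g x - h x))" by simp
  also have "\<dots> \<le> l2_norm (\<lambda>x. f x - g x) + l2_norm (\<lambda>x. g x - h x)"
    by (rule l2_norm_triangle) (use assms in \<open>auto intro: L2_diff\<close>)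
  finally show ?thesis .
qed



lemma ennreal_term_le_suminf: "(f k :: ennreal) \<le> suminf f"
proof -
  have "sum f {k} \<le> suminf f"
    by (rule sum_le_suminf) (auto intro: summableI)
  thus ?thesis by simp
qed

lemma four_pow: "(4::real)^k = 2^(k*2)"
proof -
  have "(2::real)^(k*2) = (2^2)^k" by (simp only: mult.commute[of k 2] power_mult)
  thus ?thesis by simp
qed

lemma L2_complete:
  fixes f :: "nat \<Rightarrow> real^'n::finite \<Rightarrow> complex"
  assumes L: "\<And>i. L2 (f i)"
    and C: "\<And>e. e > 0 \<Longrightarrow> \<exists>N. \<forall>i\<ge>N. \<forall>j\<ge>N. l2_norm (\<lambda>x. f i x - f j x) < e"
  shows "\<exists>y. L2 y \<and> (\<lambda>i. l2_norm (\<lambda>x. f i x - y x)) \<longlonglongrightarrow> 0"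
proof -
  have meas[measurable]: "\<And>i. f i \<in> borel_measurable lborel" using L by (simp add: L2_def)
  have "\<forall>k. \<exists>N. \<forall>i\<ge>N. \<forall>j\<ge>N. l2_norm (\<lambda>x. f i x - f j x) < (1/4)^k"
    using C by simp
  then obtain N where N: "\<And>k i j. i \<ge> N k \<Longrightarrow> j \<ge> N k \<Longrightarrow> l2_norm (\<lambda>x. f i x - f j x) < (1/4)^k"
    by metis
  define r where "r k = (\<Sum>m\<le>k. N m) + k" for k
  have rN: "r k \<ge> N k" for k unfolding r_def
    by (rule trans_le_add1) (rule member_le_sum, auto)
  have r_mono: "strict_mono r"
    by (rule strict_mono_Suc_iff[THEN iffD2]) (simp add: r_def)
  have rSuc: "r (Suc k) \<ge> N k" for k
    using rN[of k] r_mono by (meson le_trans less_imp_le strict_mono_less lessI)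
  define d where "d k x = f (r (Suc k)) x - f (r k) x" for k x
  have d_L2: "L2 (d k)" for k unfolding d_def by (intro L2_diff L)
  have d_norm: "l2_norm (d k) < (1/4)^k" for k
    unfolding d_def by (rule N[OF rSuc rN])
  have d_int: "(\<integral>x. (cmod (d k x))\<^sup>2 \<partial>lborel) \<le> (1/16)^k" for k
  proof -
    have "(\<integral>x. (cmod (d k x))\<^sup>2 \<partial>lborel) = (l2_norm (d k))\<^sup>2" by (simp add: l2_norm_sq)
    also have "\<dots> \<le> ((1/4)^k)\<^sup>2"
      using d_norm[of k] l2_norm_nonneg[of "d k"] by (intro power_mono) auto
    also have "\<dots> = (1/16)^k"
      by (subst power_mult[symmetric], subst mult.commute, subst power_mult) (simp add: power2_eq_square)
    finally show ?thesis .
  qed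
  define S where "S x = (\<Sum>k. ennreal (4^k * (cmod (d k x))\<^sup>2))" for x
  have d_meas[measurable]: "d k \<in> borel_measurable lborel" for k using d_L2 by (simp add: L2_def)
  have "(\<integral>\<^sup>+x. S x \<partial>lborel) = (\<Sum>k. \<integral>\<^sup>+x. ennreal (4^k * (cmod (d k x))\<^sup>2) \<partial>lborel)"
    unfolding S_def by (rule nn_integral_suminf) measurable
  also have "\<dots> \<le> (\<Sum>k. ennreal ((1/4)^k))"
  proof (rule suminf_le)
    fix k
    have "(\<integral>\<^sup>+x. ennreal (4^k * (cmod (d k x))\<^sup>2) \<partial>lborel)
          = ennreal (\<integral>x. 4^k * (cmod (d k x))\<^sup>2 \<partial>lborel)"
      using d_L2[of k] by (intro nn_integral_eq_integral) (auto simp: L2_def)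
    also have "\<dots> = ennreal (4^k * (\<integral>x. (cmod (d k x))\<^sup>2 \<partial>lborel))" by simp
    also have "\<dots> \<le> ennreal (4^k * (1/16)^k)"
      by (intro ennreal_leI mult_left_mono d_int) simp
    also have "4^k * (1/16)^k = ((1/4)^k :: real)"
      by (simp add: power_mult_distrib[symmetric])
    finally show "(\<integral>\<^sup>+x. ennreal (4^k * (cmod (d k x))\<^sup>2) \<partial>lborel) \<le> ennreal ((1/4)^k)" .
  qed (auto intro: summableI)
  also have "\<dots> = ennreal (\<Sum>k. (1/4)^k)"
    by (rule suminf_ennreal2) auto
  finally have Sfin: "(\<integral>\<^sup>+x. S x \<partial>lborel) < \<infinity>" by (simp add: le_less_trans)
  have "AE x in lborel. S x < \<infinity>"
    by (rule finite_nn_integral_imp_ae_finite[OF _ Sfin]) (unfold S_def, measurable)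
  hence AEconv: "AE x in lborel. convergent (\<lambda>i. f (r i) x)"
  proof (rule AE_mp, intro AE_I2 impI)
    fix x assume Sx: "S x < \<infinity>"
    define c where "c = enn2real (S x)"
    have c0: "c \<ge> 0" by (simp add: c_def)
    have bnd: "cmod (d k x) \<le> sqrt c * (1/2)^k" for k
    proof -
      have "ennreal (4^k * (cmod (d k x))\<^sup>2) \<le> S x"
        unfolding S_def by (rule ennreal_term_le_suminf)
      also have "\<dots> = ennreal c" using Sx by (simp add: c_def less_top)
      finally have "4^k * (cmod (d k x))\<^sup>2 \<le> c"
        using c0 by (simp add: ennreal_le_iff)
      hence "(cmod (d k x))\<^sup>2 \<le> c / 4^k" by (simp add: field_simps)
      also have "c / 4^k = (sqrt c * (1/2)^k)\<^sup>2"
        using c0 by (simp add: power_mult_distrib power_divide four_pow flip: power_mult)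
      finally show ?thesis
        by (rule power2_le_imp_le) (simp add: c0)
    qed
    have "summable (\<lambda>k. sqrt c * (1/2::real)^k)"
      by (intro summable_mult summable_geometric) simp
    hence "summable (\<lambda>k. d k x)"
      apply (rule summable_comparison_test[rotated])
      using bnd by blast
    hence "convergent (\<lambda>n. \<Sum>k<n. d k x)"
      using summable_iff_convergent by blast
    moreover have "(\<lambda>n. \<Sum>k<n. d k x) = (\<lambda>n. f (r n) x - f (r 0) x)"
      unfolding d_def by (rule ext, rule sum_lessThan_telescope)
    ultimately have "convergent (\<lambda>n. f (r n) x - f (r 0) x + f (r 0) x)"
      by (intro convergent_add convergent_const) auto
    thus "convergent (\<lambda>i. f (r i) x)" by simp
  qed
  define y where "y x = lim (\<lambda>i. f (r i) x)" for x
  have y_meas[measurable]: "y \<in> borel_measurable lborel"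
    unfolding y_def by measurable
  have AElim: "AE x in lborel. (\<lambda>i. f (r i) x) \<longlonglongrightarrow> y x"
    using AEconv by eventually_elim (simp add: y_def convergent_LIMSEQ_iff)
  have key: "l2_norm (\<lambda>x. f m x - y x) \<le> e \<and> L2 (\<lambda>x. f m x - y x)"
    if e: "e > 0" and m: "\<forall>i\<ge>M. \<forall>j\<ge>M. l2_norm (\<lambda>x. f i x - f j x) < e" "m \<ge> M" for e M m
  proof -
    let ?u = "\<lambda>i x. ennreal ((cmod (f m x - f (r i) x))\<^sup>2)"
    have "AE x in lborel. liminf (\<lambda>i. ?u i x) = ennreal ((cmod (f m x - y x))\<^sup>2)"
      using AElim
    proof eventually_elim
      case (elim x)
      have "(\<lambda>i. ?u i x) \<longlonglongrightarrow> ennreal ((cmod (f m x - y x))\<^sup>2)"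
        by (intro tendsto_ennrealI tendsto_intros elim)
      thus ?case by (rule lim_imp_Liminf[rotated]) simp
    qed
    hence "(\<integral>\<^sup>+x. ennreal ((cmod (f m x - y x))\<^sup>2) \<partial>lborel) = (\<integral>\<^sup>+x. liminf (\<lambda>i. ?u i x) \<partial>lborel)"
      by (intro nn_integral_cong_AE) (auto elim: eventually_mono)
    also have "\<dots> \<le> liminf (\<lambda>i. \<integral>\<^sup>+x. ?u i x \<partial>lborel)"
      by (rule nn_integral_liminf) measurable
    also have "\<dots> \<le> liminf (\<lambda>i. ennreal (e\<^sup>2))"
    proof (rule Liminf_mono)
      have "eventually (\<lambda>i. r i \<ge> M) sequentially"
        using eventually_ge_at_top[of M]
        by eventually_elim (use r_mono in \<open>meson le_trans seq_suble\<close>)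
      thus "eventually (\<lambda>i. (\<integral>\<^sup>+x. ?u i x \<partial>lborel) \<le> ennreal (e\<^sup>2)) sequentially"
      proof eventually_elim
        case (elim i)
        have Li: "L2 (\<lambda>x. f m x - f (r i) x)" by (intro L2_diff L)
        have "(\<integral>\<^sup>+x. ?u i x \<partial>lborel) = ennreal (\<integral>x. (cmod (f m x - f (r i) x))\<^sup>2 \<partial>lborel)"
          using Li by (intro nn_integral_eq_integral) (auto simp: L2_def)
        also have "\<dots> = ennreal ((l2_norm (\<lambda>x. f m x - f (r i) x))\<^sup>2)" by (simp add: l2_norm_sq)
        also have "\<dots> \<le> ennreal (e\<^sup>2)"
          using m(1) elim \<open>m \<ge> M\<close> l2_norm_nonneg
          by (intro ennreal_leI power_mono) (auto simp: less_imp_le)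
        finally show ?case .
      qed
    qed
    also have "\<dots> = ennreal (e\<^sup>2)" by (simp add: Liminf_const)
    finally have I: "(\<integral>\<^sup>+x. ennreal ((cmod (f m x - y x))\<^sup>2) \<partial>lborel) \<le> ennreal (e\<^sup>2)" .
    have intg: "integrable lborel (\<lambda>x. (cmod (f m x - y x))\<^sup>2)"
      by (rule integrableI_nonneg) (use I in \<open>auto simp: le_less_trans\<close>)
    hence L2d: "L2 (\<lambda>x. f m x - y x)" by (simp add: L2_def)
    have "ennreal (\<integral>x. (cmod (f m x - y x))\<^sup>2 \<partial>lborel) \<le> ennreal (e\<^sup>2)"
      using I intg by (subst nn_integral_eq_integral[symmetric]) auto
    hence "(l2_norm (\<lambda>x. f m x - y x))\<^sup>2 \<le> e\<^sup>2" by (simp add: l2_norm_sq ennreal_le_iff)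
    hence "l2_norm (\<lambda>x. f m x - y x) \<le> e"
      by (rule power2_le_imp_le) (use e in simp)
    thus ?thesis using L2d by simp
  qed
  obtain M1 where M1: "\<forall>i\<ge>M1. \<forall>j\<ge>M1. l2_norm (\<lambda>x. f i x - f j x) < 1" using C[of 1] by auto
  have d1: "L2 (\<lambda>x. f M1 x - y x)" using key[of 1 M1 M1] M1 by simp
  have "L2 (\<lambda>x. f M1 x - (f M1 x - y x))" by (rule L2_diff[OF L d1])
  hence Ly: "L2 y" by simp
  have "(\<lambda>i. l2_norm (\<lambda>x. f i x - y x)) \<longlonglongrightarrow> 0"
  proof (rule LIMSEQ_I)
    fix e :: real assume e: "e > 0"
    obtain M where M: "\<forall>i\<ge>M. \<forall>j\<ge>M. l2_norm (\<lambda>x. f i x - f j x) < e/2" using C[of "e/2"] e by auto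
    have "\<forall>n\<ge>M. norm (l2_norm (\<lambda>x. f n x - y x) - 0) < e"
    proof (intro allI impI)
      fix n assume "n \<ge> M"
      hence "l2_norm (\<lambda>x. f n x - y x) \<le> e/2" using key[of "e/2" M n] M e by simp
      thus "norm (l2_norm (\<lambda>x. f n x - y x) - 0) < e"
        using e l2_norm_nonneg[of "\<lambda>x. f n x - y x"] by simp
    qed
    thus "\<exists>no. \<forall>n\<ge>no. norm (l2_norm (\<lambda>x. f n x - y x) - 0) < e" by blast
  qed
  with Ly show ?thesis by blast
qed



definition gs_res :: "(nat \<Rightarrow> real^'n::finite \<Rightarrow> complex) \<Rightarrow> (nat \<Rightarrow> real^'n \<Rightarrow> complex) \<Rightarrow> nat \<Rightarrow> real^'n \<Rightarrow> complex" where
  "gs_res x E k = (\<lambda>z. x k z - (\<Sum>j<k. l2_inner (x k) (E j) * E j z))"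

definition gs_step :: "(nat \<Rightarrow> real^'n::finite \<Rightarrow> complex) \<Rightarrow> (nat \<Rightarrow> real^'n \<Rightarrow> complex) \<Rightarrow> nat \<Rightarrow> real^'n \<Rightarrow> complex" where
  "gs_step x E k = (if l2_norm (gs_res x E k) = 0 then (\<lambda>z. 0)
      else (\<lambda>z. (1 / complex_of_real (l2_norm (gs_res x E k))) * gs_res x E k z))"

primrec gs_fam :: "(nat \<Rightarrow> real^'n::finite \<Rightarrow> complex) \<Rightarrow> nat \<Rightarrow> nat \<Rightarrow> real^'n \<Rightarrow> complex" where
  "gs_fam x 0 = (\<lambda>j z. 0)"
| "gs_fam x (Suc k) = (gs_fam x k)(k := gs_step x (gs_fam x k) k)"

definition gs :: "(nat \<Rightarrow> real^'n::finite \<Rightarrow> complex) \<Rightarrow> nat \<Rightarrow> real^'n \<Rightarrow> complex" where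
  "gs x k = gs_fam x (Suc k) k"

lemma gs_fam_gs: "j < m \<Longrightarrow> gs_fam x m j = gs x j"
proof (induction m)
  case 0 then show ?case by simp
next
  case (Suc m)
  show ?case
  proof (cases "j = m")
    case True then show ?thesis by (simp add: gs_def)
  next
    case False then show ?thesis using Suc by simp
  qed
qed

lemma gs_res_cong: "(\<And>j. j < k \<Longrightarrow> E j = E' j) \<Longrightarrow> gs_res x E k = gs_res x E' k"
  unfolding gs_res_def by (rule ext) (auto intro!: sum.cong)

lemma gs_eq: "gs x k = gs_step x (gs x) k"
proof -
  have "gs x k = gs_step x (gs_fam x k) k" by (simp add: gs_def)
  also have "gs_res x (gs_fam x k) k = gs_res x (gs x) k"
    by (rule gs_res_cong) (simp add: gs_fam_gs)
  hence "gs_step x (gs_fam x k) k = gs_step x (gs x) k"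
    unfolding gs_step_def by simp
  finally show ?thesis .
qed

locale GS =
  fixes x :: "nat \<Rightarrow> real^'n::finite \<Rightarrow> complex"
  assumes xL2: "\<And>k. L2 (x k)"
begin

abbreviation "e \<equiv> gs x"
abbreviation "r \<equiv> gs_res x (gs x)"
definition "Z k \<longleftrightarrow> l2_norm (r k) = 0"

lemma e_def': "e k = (if Z k then (\<lambda>z. 0) else (\<lambda>z. (1 / complex_of_real (l2_norm (r k))) * r k z))"
  by (subst gs_eq) (simp add: gs_step_def Z_def)

lemma eZ: "Z k \<Longrightarrow> e k = (\<lambda>z. 0)"
  by (simp add: e_def')

lemma cnj_sq: "z * cnj z = (complex_of_real (cmod z))\<^sup>2"
  using complex_norm_square[of z] by simp

lemma inner_zero_right[simp]: "l2_inner h (\<lambda>z. 0) = 0"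
  by (simp add: l2_inner_def)
lemma inner_zero_left[simp]: "l2_inner (\<lambda>z. 0) h = 0"
  by (simp add: l2_inner_def)

lemma e_L2: "L2 (e k)"
proof (induction k rule: less_induct)
  case (less k)
  have rL: "L2 (r k)" unfolding gs_res_def
    by (intro L2_diff xL2 L2_sum L2_cmult less) auto
  show ?case
  proof (cases "Z k")
    case True thus ?thesis by (simp add: eZ L2_zero)
  next
    case False
    hence "e k = (\<lambda>z. (1 / complex_of_real (l2_norm (r k))) * r k z)" by (simp add: e_def')
    show ?thesis by (subst \<open>e k = _\<close>, rule L2_cmult[OF rL])
  qed
qed

lemma r_L2: "L2 (r k)" unfolding gs_res_def
  by (intro L2_diff xL2 L2_sum L2_cmult e_L2) auto

lemma r_e: "\<not> Z k \<Longrightarrow> r k z = complex_of_real (l2_norm (r k)) * e k z"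
  by (simp add: e_def' Z_def)

lemma e_norm: assumes "\<not> Z k" shows "l2_norm (e k) = 1"
proof -
  have eq: "e k = (\<lambda>z. (1 / complex_of_real (l2_norm (r k))) * r k z)" using assms by (simp add: e_def')
  have "l2_norm (e k) = cmod (1 / complex_of_real (l2_norm (r k))) * l2_norm (r k)"
    by (subst eq, rule l2_norm_cmult)
  also have "\<dots> = 1" using assms l2_norm_nonneg[of "r k"]
    by (simp add: Z_def norm_divide)
  finally show ?thesis .
qed

lemma e_self: "l2_inner (e k) (e k) = (if Z k then 0 else 1)"
  by (cases "Z k") (simp_all add: eZ l2_inner_self[OF e_L2] e_norm)

lemma absorb: "l2_inner h (e j) * l2_inner (e j) (e j) = l2_inner h (e j)"
  by (cases "Z j") (simp_all add: eZ e_self)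

lemma ortho_lt: "i < k \<Longrightarrow> l2_inner (e k) (e i) = 0"
proof (induction k arbitrary: i rule: less_induct)
  case (less k)
  show ?case
  proof (cases "Z k")
    case True then show ?thesis by (simp add: eZ)
  next
    case False
    have oth: "l2_inner (e j) (e i) = 0" if "j < k" "j \<noteq> i" for j
    proof (cases "i < j")
      case True then show ?thesis using less(1)[OF that(1) True] by simp
    next
      case False
      hence "j < i" using that(2) by simp
      hence "l2_inner (e i) (e j) = 0" using less(1) less(2) by blast
      thus "l2_inner (e j) (e i) = 0" using l2_inner_cnj[of "e i" "e j"] by simp
    qed
    have "l2_inner (r k) (e i) = l2_inner (x k) (e i) - l2_inner (\<lambda>z. \<Sum>j<k. l2_inner (x k) (e j) * e j z) (e i)"
      unfolding gs_res_def
      by (rule l2_inner_diff_left) (auto intro!: xL2 L2_sum L2_cmult e_L2)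
    also have "l2_inner (\<lambda>z. \<Sum>j<k. l2_inner (x k) (e j) * e j z) (e i)
        = (\<Sum>j<k. l2_inner (x k) (e j) * l2_inner (e j) (e i))"
      by (rule l2_inner_sum_left) (auto intro: e_L2)
    also have "\<dots> = (\<Sum>j<k. if j = i then l2_inner (x k) (e i) * l2_inner (e i) (e i) else 0)"
      by (rule sum.cong) (auto simp: oth)
    also have "\<dots> = l2_inner (x k) (e i)"
      using less(2) by (simp add: absorb)
    finally have r0: "l2_inner (r k) (e i) = 0" by simp
    have eq: "e k = (\<lambda>z. (1 / complex_of_real (l2_norm (r k))) * r k z)"
      using False by (simp add: e_def')
    have "l2_inner (e k) (e i) = (1 / complex_of_real (l2_norm (r k))) * l2_inner (r k) (e i)"
      by (subst eq, rule l2_inner_cmult_left)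
    thus ?thesis using r0 by simp
  qed
qed

lemma ortho: "l2_inner (e i) (e j) = (if i = j \<and> \<not> Z i then 1 else 0)"
proof -
  consider "i = j" | "j < i" | "i < j" by linarith
  then show ?thesis
  proof cases
    case 1 then show ?thesis by (simp add: e_self)
  next
    case 2 then show ?thesis by (simp add: ortho_lt)
  next
    case 3
    have "l2_inner (e j) (e i) = 0" using 3 by (simp add: ortho_lt)
    hence "l2_inner (e i) (e j) = 0" using l2_inner_cnj[of "e j" "e i"] by simp
    then show ?thesis using 3 by simp
  qed
qed

lemma inner_sum_e_right:
  assumes "finite A" "L2 h"
  shows "l2_inner h (\<lambda>z. \<Sum>j\<in>A. c j * e j z) = (\<Sum>j\<in>A. cnj (c j) * l2_inner h (e j))"
  by (rule l2_inner_sum_right) (use assms in \<open>auto intro: e_L2\<close>)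

lemma inner_e_sum:
  assumes "finite A"
  shows "l2_inner (e k) (\<lambda>z. \<Sum>j\<in>A. c j * e j z) = (if k \<in> A \<and> \<not> Z k then cnj (c k) else 0)"
proof -
  have "l2_inner (e k) (\<lambda>z. \<Sum>j\<in>A. c j * e j z) = (\<Sum>j\<in>A. cnj (c j) * l2_inner (e k) (e j))"
    by (rule inner_sum_e_right[OF assms e_L2])
  also have "\<dots> = (\<Sum>j\<in>A. if j = k then (if Z k then 0 else cnj (c k)) else 0)"
    by (rule sum.cong) (auto simp: ortho)
  also have "\<dots> = (if k \<in> A \<and> \<not> Z k then cnj (c k) else 0)"
    using assms by (simp add: sum.delta')
  finally show ?thesis .
qed

lemma norm_sum_e:
  assumes "finite A"
  shows "(l2_norm (\<lambda>z. \<Sum>j\<in>A. c j * e j z))\<^sup>2 \<le> (\<Sum>j\<in>A. (cmod (c j))\<^sup>2)"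
proof -
  let ?s = "\<lambda>z. \<Sum>j\<in>A. c j * e j z"
  have sL: "L2 ?s" by (intro L2_sum L2_cmult e_L2 assms)
  have "l2_inner ?s ?s = (\<Sum>k\<in>A. c k * l2_inner (e k) ?s)"
    by (rule l2_inner_sum_left) (use assms sL in \<open>auto intro: e_L2\<close>)
  also have "\<dots> = (\<Sum>k\<in>A. if Z k then 0 else complex_of_real ((cmod (c k))\<^sup>2))"
    by (rule sum.cong) (auto simp: inner_e_sum[OF assms] cnj_sq)
  also have "\<dots> = complex_of_real (\<Sum>k\<in>A. if Z k then 0 else (cmod (c k))\<^sup>2)"
    unfolding of_real_sum by (rule sum.cong) auto
  finally have "l2_inner ?s ?s = complex_of_real (\<Sum>k\<in>A. if Z k then 0 else (cmod (c k))\<^sup>2)" .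
  hence "complex_of_real ((l2_norm ?s)\<^sup>2) = complex_of_real (\<Sum>k\<in>A. if Z k then 0 else (cmod (c k))\<^sup>2)"
    by (simp only: l2_inner_self[OF sL])
  hence "(l2_norm ?s)\<^sup>2 = (\<Sum>k\<in>A. if Z k then 0 else (cmod (c k))\<^sup>2)"
    by (simp only: of_real_eq_iff)
  also have "\<dots> \<le> (\<Sum>j\<in>A. (cmod (c j))\<^sup>2)"
    by (rule sum_mono) simp
  finally show ?thesis .
qed

lemma bessel:
  assumes "finite A" "L2 g"
  shows "(\<Sum>k\<in>A. (cmod (l2_inner g (e k)))\<^sup>2) \<le> (l2_norm g)\<^sup>2"
proof -
  define a where "a k = l2_inner g (e k)" for k
  let ?s = "\<lambda>z. \<Sum>j\<in>A. a j * e j z"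
  define h where "h = (\<lambda>z. g z - ?s z)"
  have sL: "L2 ?s" by (intro L2_sum L2_cmult e_L2 assms)
  have hL: "L2 h" unfolding h_def by (intro L2_diff assms sL)
  have eh: "l2_inner (e k) h = 0" if "k \<in> A" for k
  proof -
    have "l2_inner (e k) h = cnj (l2_inner h (e k))" by (simp add: l2_inner_cnj)
    also have "l2_inner h (e k) = l2_inner g (e k) - l2_inner ?s (e k)"
      unfolding h_def by (rule l2_inner_diff_left[OF assms(2) sL e_L2])
    also have "l2_inner ?s (e k) = cnj (l2_inner (e k) ?s)" by (simp add: l2_inner_cnj)
    also have "\<dots> = (if Z k then 0 else a k)"
      using that by (simp add: inner_e_sum[OF assms(1)])
    also have "l2_inner g (e k) - (if Z k then 0 else a k) = 0"
      by (cases "Z k") (simp_all add: a_def eZ)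
    finally show ?thesis by simp
  qed
  have "l2_inner h h = l2_inner g h - l2_inner ?s h"
    unfolding h_def by (rule l2_inner_diff_left[OF assms(2) sL hL[unfolded h_def]])
  also have "l2_inner ?s h = (\<Sum>k\<in>A. a k * l2_inner (e k) h)"
    by (rule l2_inner_sum_left) (use assms hL in \<open>auto intro: e_L2\<close>)
  also have "\<dots> = 0" by (simp add: eh)
  also have "l2_inner g h = l2_inner g g - l2_inner g ?s"
  proof -
    have "l2_inner h g = l2_inner g g - l2_inner ?s g"
      unfolding h_def by (rule l2_inner_diff_left[OF assms(2) sL assms(2)])
    hence "cnj (l2_inner h g) = cnj (l2_inner g g - l2_inner ?s g)" by simp
    thus ?thesis by (simp add: l2_inner_cnj)
  qed
  also have "l2_inner g ?s = (\<Sum>k\<in>A. cnj (a k) * a k)"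
    unfolding inner_sum_e_right[OF assms] a_def by simp
  also have "\<dots> = complex_of_real (\<Sum>k\<in>A. (cmod (a k))\<^sup>2)"
    by (simp add: cnj_sq mult.commute)
  finally have "complex_of_real ((l2_norm h)\<^sup>2) = complex_of_real ((l2_norm g)\<^sup>2) - complex_of_real (\<Sum>k\<in>A. (cmod (a k))\<^sup>2)"
    by (simp add: l2_inner_self[OF hL] l2_inner_self[OF assms(2)])
  hence "(l2_norm h)\<^sup>2 = (l2_norm g)\<^sup>2 - (\<Sum>k\<in>A. (cmod (a k))\<^sup>2)"
    by (simp only: of_real_diff[symmetric] of_real_eq_iff)
  moreover have "(l2_norm h)\<^sup>2 \<ge> 0" by simp
  ultimately show ?thesis by (simp add: a_def)
qed

lemma recon: "l2_norm (\<lambda>z. x k z - (\<Sum>j\<le>k. l2_inner (x k) (e j) * e j z)) = 0"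
proof (cases "Z k")
  case True
  have "(\<lambda>z. x k z - (\<Sum>j\<le>k. l2_inner (x k) (e j) * e j z)) = r k"
    unfolding gs_res_def using True
    by (simp add: lessThan_Suc_atMost[symmetric] eZ)
  then show ?thesis using True by (simp add: Z_def)
next
  case False
  let ?p = "\<lambda>z. \<Sum>j<k. l2_inner (x k) (e j) * e j z"
  have xk: "x k = (\<lambda>z. r k z + ?p z)" unfolding gs_res_def by simp
  have pL: "L2 ?p" by (intro L2_sum L2_cmult e_L2) auto
  have "l2_inner (x k) (e k) = l2_inner (r k) (e k) + l2_inner ?p (e k)"
    by (subst xk) (rule l2_inner_add_left[OF r_L2 pL e_L2])
  also have "l2_inner ?p (e k) = (\<Sum>j<k. l2_inner (x k) (e j) * l2_inner (e j) (e k))"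
    by (rule l2_inner_sum_left) (auto intro: e_L2)
  also have "\<dots> = 0" by (simp add: ortho)
  also have "l2_inner (r k) (e k) = l2_inner (\<lambda>z. complex_of_real (l2_norm (r k)) * e k z) (e k)"
    by (rule arg_cong[where f="\<lambda>f. l2_inner f (e k)"], rule ext, rule r_e[OF False])
  also have "\<dots> = complex_of_real (l2_norm (r k))"
    by (simp add: l2_inner_cmult_left e_self False)
  finally have c: "l2_inner (x k) (e k) = complex_of_real (l2_norm (r k))" by simp
  have "(\<lambda>z. x k z - (\<Sum>j\<le>k. l2_inner (x k) (e j) * e j z)) = (\<lambda>z. 0)"
  proof
    fix z
    have "x k z - (\<Sum>j\<le>k. l2_inner (x k) (e j) * e j z)
        = r k z + ?p z - (?p z + l2_inner (x k) (e k) * e k z)"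
      by (subst xk) (simp add: lessThan_Suc_atMost[symmetric])
    also have "\<dots> = 0" by (simp add: c r_e[OF False])
    finally show "x k z - (\<Sum>j\<le>k. l2_inner (x k) (e j) * e j z) = 0" .
  qed
  then show ?thesis by (simp add: l2_norm_def)
qed

end



lemma cs_complex:
  fixes u v :: "nat \<Rightarrow> complex"
  shows "cmod (\<Sum>k\<in>A. u k * cnj (v k)) \<le> sqrt (\<Sum>k\<in>A. (cmod (u k))\<^sup>2) * sqrt (\<Sum>k\<in>A. (cmod (v k))\<^sup>2)"
proof -
  have "cmod (\<Sum>k\<in>A. u k * cnj (v k)) \<le> (\<Sum>k\<in>A. cmod (u k * cnj (v k)))" by (rule norm_sum)
  also have "\<dots> = (\<Sum>k\<in>A. cmod (u k) * cmod (v k))" by (simp add: norm_mult)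
  also have "\<dots> \<le> sqrt (\<Sum>k\<in>A. (cmod (u k))\<^sup>2) * sqrt (\<Sum>k\<in>A. (cmod (v k))\<^sup>2)"
  proof -
    have "(\<Sum>k\<in>A. cmod (u k) * cmod (v k))\<^sup>2 \<le> (\<Sum>k\<in>A. (cmod (u k))\<^sup>2) * (\<Sum>k\<in>A. (cmod (v k))\<^sup>2)"
      by (rule Cauchy_Schwarz_ineq_sum)
    hence "sqrt ((\<Sum>k\<in>A. cmod (u k) * cmod (v k))\<^sup>2) \<le> sqrt ((\<Sum>k\<in>A. (cmod (u k))\<^sup>2) * (\<Sum>k\<in>A. (cmod (v k))\<^sup>2))"
      by (rule real_sqrt_le_mono)
    moreover have "sqrt ((\<Sum>k\<in>A. cmod (u k) * cmod (v k))\<^sup>2) = (\<Sum>k\<in>A. cmod (u k) * cmod (v k))"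
      by (simp add: sum_nonneg)
    ultimately show ?thesis by (simp add: real_sqrt_mult)
  qed
  finally show ?thesis .
qed

lemma sum_split_ivl:
  fixes f :: "nat \<Rightarrow> 'a::comm_monoid_add"
  assumes "K \<le> M"
  shows "(\<Sum>k\<le>M. f k) = (\<Sum>k\<le>K. f k) + (\<Sum>k\<in>{K<..M}. f k)"
proof -
  have "{..M} = {..K} \<union> {K<..M}" using assms by auto
  hence "(\<Sum>k\<le>M. f k) = sum f ({..K} \<union> {K<..M})" by simp
  also have "\<dots> = (\<Sum>k\<le>K. f k) + (\<Sum>k\<in>{K<..M}. f k)"
    by (rule sum.union_disjoint) auto
  finally show ?thesis .
qed

lemma sq_tail:
  fixes b :: "nat \<Rightarrow> complex"
  assumes B: "\<And>K. (\<Sum>k\<le>K. (cmod (b k))\<^sup>2) \<le> Bd" and \<epsilon>: "\<epsilon> > 0"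
  shows "\<exists>N. \<forall>j\<ge>N. \<forall>i. (\<Sum>k\<in>{j<..i}. (cmod (b k))\<^sup>2) < \<epsilon>"
proof -
  define G2 where "G2 k = (cmod (b k))\<^sup>2" for k
  have sG: "summable G2"
  proof (rule summableI_nonneg_bounded)
    fix n
    have "sum G2 {..<n} \<le> sum G2 {..n}" by (rule sum_mono2) (auto simp: G2_def)
    also have "\<dots> \<le> Bd" using B by (simp add: G2_def)
    finally show "sum G2 {..<n} \<le> Bd" .
  qed (simp add: G2_def)
  have tail: "(\<lambda>K. suminf G2 - (\<Sum>k\<le>K. G2 k)) \<longlonglongrightarrow> 0"
    using tendsto_diff[OF tendsto_const[of "suminf G2"] summable_LIMSEQ'[OF sG]] by simp
  have part: "(\<Sum>k\<in>{K<..M}. G2 k) \<le> suminf G2 - (\<Sum>k\<le>K. G2 k)" for K M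
  proof -
    have "(\<Sum>k\<le>K. G2 k) + (\<Sum>k\<in>{K<..M}. G2 k) = sum G2 ({..K} \<union> {K<..M})"
      by (rule sum.union_disjoint[symmetric]) auto
    also have "\<dots> \<le> suminf G2"
      by (rule sum_le_suminf[OF sG]) (auto simp: G2_def)
    finally show ?thesis by simp
  qed
  have "eventually (\<lambda>K. \<bar>suminf G2 - (\<Sum>k\<le>K. G2 k)\<bar> < \<epsilon>) sequentially"
    using tail \<epsilon> by (auto simp: tendsto_iff dist_real_def dest!: spec[of _ \<epsilon>])
  then obtain N where N: "\<And>j. j \<ge> N \<Longrightarrow> \<bar>suminf G2 - (\<Sum>k\<le>j. G2 k)\<bar> < \<epsilon>"
    by (auto simp: eventually_sequentially)
  show ?thesis
  proof (intro exI allI impI)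
    fix j i assume "j \<ge> N"
    have "(\<Sum>k\<in>{j<..i}. G2 k) \<le> suminf G2 - (\<Sum>k\<le>j. G2 k)" by (rule part)
    also have "\<dots> < \<epsilon>" using N[OF \<open>j \<ge> N\<close>] by linarith
    finally show "(\<Sum>k\<in>{j<..i}. (cmod (b k))\<^sup>2) < \<epsilon>" by (simp add: G2_def)
  qed
qed

lemma seq_lemma:
  fixes a :: "nat \<Rightarrow> nat \<Rightarrow> complex" and b g :: "nat \<Rightarrow> complex" and Nn :: "nat \<Rightarrow> nat"
  assumes A: "\<And>n K. (\<Sum>k\<le>K. (cmod (a n k))\<^sup>2) \<le> 1"
    and G: "\<And>K. (\<Sum>k\<le>K. (cmod (g k))\<^sup>2) \<le> Gb"
    and conv: "\<And>k. (\<lambda>n. a n k) \<longlonglongrightarrow> b k"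
    and N: "filterlim Nn at_top sequentially"
    and T: "(\<lambda>K. \<Sum>k\<le>K. b k * cnj (g k)) \<longlonglongrightarrow> T"
  shows "(\<lambda>n. \<Sum>k\<le>Nn n. a n k * cnj (g k)) \<longlonglongrightarrow> T"
proof -
  define G2 where "G2 k = (cmod (g k))\<^sup>2" for k
  have sG: "summable G2"
  proof (rule summableI_nonneg_bounded)
    fix n
    have "sum G2 {..<n} \<le> sum G2 {..n}" by (rule sum_mono2) (auto simp: G2_def)
    also have "\<dots> \<le> Gb" using G by (simp add: G2_def)
    finally show "sum G2 {..<n} \<le> Gb" .
  qed (simp add: G2_def)
  have tail: "(\<lambda>K. suminf G2 - (\<Sum>k\<le>K. G2 k)) \<longlonglongrightarrow> 0"
    using tendsto_diff[OF tendsto_const[of "suminf G2"] summable_LIMSEQ'[OF sG]] by simp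
  have part: "(\<Sum>k\<in>{K<..M}. G2 k) \<le> suminf G2 - (\<Sum>k\<le>K. G2 k)" for K M
  proof -
    have "(\<Sum>k\<le>K. G2 k) + (\<Sum>k\<in>{K<..M}. G2 k) = sum G2 ({..K} \<union> {K<..M})"
      by (rule sum.union_disjoint[symmetric]) auto
    also have "\<dots> \<le> suminf G2"
      by (rule sum_le_suminf[OF sG]) (auto simp: G2_def)
    finally show ?thesis by simp
  qed
  have Bb: "(\<Sum>k\<le>K. (cmod (b k))\<^sup>2) \<le> 1" for K
  proof (rule LIMSEQ_le_const2)
    show "(\<lambda>n. \<Sum>k\<le>K. (cmod (a n k))\<^sup>2) \<longlonglongrightarrow> (\<Sum>k\<le>K. (cmod (b k))\<^sup>2)"
      by (intro tendsto_intros conv)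
  qed (use A in auto)
  have Ap: "(\<Sum>k\<in>{K<..M}. (cmod (a n k))\<^sup>2) \<le> 1" for n K M
  proof -
    have "(\<Sum>k\<in>{K<..M}. (cmod (a n k))\<^sup>2) \<le> (\<Sum>k\<le>M. (cmod (a n k))\<^sup>2)"
      by (rule sum_mono2) auto
    thus ?thesis using A[of n M] by simp
  qed
  have Bp: "(\<Sum>k\<in>{K<..M}. (cmod (b k))\<^sup>2) \<le> 1" for K M
  proof -
    have "(\<Sum>k\<in>{K<..M}. (cmod (b k))\<^sup>2) \<le> (\<Sum>k\<le>M. (cmod (b k))\<^sup>2)"
      by (rule sum_mono2) auto
    thus ?thesis using Bb[of M] by simp
  qed
  have split: "(\<Sum>k\<le>M. f k) = (\<Sum>k\<le>K. f k) + (\<Sum>k\<in>{K<..M}. f k)" if "K \<le> M" for K M and f :: "nat \<Rightarrow> complex"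
  proof -
    have "{..M} = {..K} \<union> {K<..M}" using that by auto
    hence "(\<Sum>k\<le>M. f k) = sum f ({..K} \<union> {K<..M})" by simp
    also have "\<dots> = (\<Sum>k\<le>K. f k) + (\<Sum>k\<in>{K<..M}. f k)"
      by (rule sum.union_disjoint) auto
    finally show ?thesis .
  qed
  have tailbound: "cmod (\<Sum>k\<in>{K<..M}. c k * cnj (g k)) \<le> sqrt (suminf G2 - (\<Sum>k\<le>K. G2 k))"
    if c: "(\<Sum>k\<in>{K<..M}. (cmod (c k))\<^sup>2) \<le> 1" for c K M
  proof -
    have "cmod (\<Sum>k\<in>{K<..M}. c k * cnj (g k)) \<le> sqrt (\<Sum>k\<in>{K<..M}. (cmod (c k))\<^sup>2) * sqrt (\<Sum>k\<in>{K<..M}. G2 k)"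
      unfolding G2_def by (rule cs_complex)
    also have "\<dots> \<le> 1 * sqrt (suminf G2 - (\<Sum>k\<le>K. G2 k))"
      by (intro mult_mono real_sqrt_le_mono part) (use c in \<open>auto simp: G2_def sum_nonneg\<close>)
    finally show ?thesis by simp
  qed
  show ?thesis
  proof (rule tendstoI)
    fix \<epsilon> :: real assume \<epsilon>: "\<epsilon> > 0"
    have "eventually (\<lambda>K. suminf G2 - (\<Sum>k\<le>K. G2 k) < (\<epsilon>/3)\<^sup>2) sequentially"
    proof -
      have "eventually (\<lambda>K. \<bar>suminf G2 - (\<Sum>k\<le>K. G2 k)\<bar> < (\<epsilon>/3)\<^sup>2) sequentially"
        using tail \<epsilon> by (auto simp: tendsto_iff dist_real_def dest!: spec[of _ "(\<epsilon>/3)\<^sup>2"])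
      thus ?thesis by eventually_elim linarith
    qed
    then obtain K0 where K0: "suminf G2 - (\<Sum>k\<le>K0. G2 k) < (\<epsilon>/3)\<^sup>2"
      by (auto simp: eventually_sequentially)
    define \<delta> where "\<delta> = sqrt (suminf G2 - (\<Sum>k\<le>K0. G2 k))"
    have \<delta>: "\<delta> < \<epsilon>/3"
    proof -
      have "\<delta> < sqrt ((\<epsilon>/3)\<^sup>2)" unfolding \<delta>_def using K0 by (rule real_sqrt_less_mono)
      thus ?thesis using \<epsilon> by simp
    qed
    define P where "P = (\<Sum>k\<le>K0. b k * cnj (g k))"
    have i: "cmod (T - P) \<le> \<delta>"
    proof (rule LIMSEQ_le_const2)
      show "(\<lambda>K. cmod ((\<Sum>k\<le>K. b k * cnj (g k)) - P)) \<longlonglongrightarrow> cmod (T - P)"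
        by (intro tendsto_intros T)
      show "\<exists>N. \<forall>K\<ge>N. cmod ((\<Sum>k\<le>K. b k * cnj (g k)) - P) \<le> \<delta>"
      proof (intro exI allI impI)
        fix K assume "K0 \<le> K"
        hence "(\<Sum>k\<le>K. b k * cnj (g k)) - P = (\<Sum>k\<in>{K0<..K}. b k * cnj (g k))"
          unfolding P_def by (simp add: split)
        thus "cmod ((\<Sum>k\<le>K. b k * cnj (g k)) - P) \<le> \<delta>"
          unfolding \<delta>_def using tailbound[OF Bp] by simp
      qed
    qed
    have ii: "(\<lambda>n. \<Sum>k\<le>K0. a n k * cnj (g k)) \<longlonglongrightarrow> P"
      unfolding P_def by (intro tendsto_intros conv)
    have ev1: "eventually (\<lambda>n. cmod ((\<Sum>k\<le>K0. a n k * cnj (g k)) - P) < \<epsilon>/3) sequentially"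
      using ii \<epsilon> unfolding tendsto_iff dist_norm by (auto dest!: spec[of _ "\<epsilon>/3"])
    have ev2: "eventually (\<lambda>n. K0 \<le> Nn n) sequentially"
      using N by (simp add: filterlim_at_top)
    show "eventually (\<lambda>n. dist (\<Sum>k\<le>Nn n. a n k * cnj (g k)) T < \<epsilon>) sequentially"
      using ev1 ev2
    proof eventually_elim
      case (elim n)
      have eq: "(\<Sum>k\<le>Nn n. a n k * cnj (g k)) - T
          = ((\<Sum>k\<le>K0. a n k * cnj (g k)) - P) + (\<Sum>k\<in>{K0<..Nn n}. a n k * cnj (g k)) + (P - T)"
        using split[OF elim(2), of "\<lambda>k. a n k * cnj (g k)"] by simp
      have "cmod ((\<Sum>k\<le>Nn n. a n k * cnj (g k)) - T)
          \<le> cmod ((\<Sum>k\<le>K0. a n k * cnj (g k)) - P) + cmod (\<Sum>k\<in>{K0<..Nn n}. a n k * cnj (g k)) + cmod (P - T)"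
        unfolding eq by (rule order_trans[OF norm_triangle_ineq add_right_mono[OF norm_triangle_ineq]])
      also have "\<dots> < \<epsilon>/3 + \<delta> + \<delta>"
        using elim(1) tailbound[OF Ap, of n K0 "Nn n"] i
        by (simp add: \<delta>_def norm_minus_commute)
      also have "\<dots> < \<epsilon>" using \<delta> by simp
      finally show ?case by (simp add: dist_norm)
    qed
  qed
qed



theorem lemma3p3:
  fixes V :: "real^'n::finite \<Rightarrow> real"
    and U :: "real \<Rightarrow> (real^'n \<Rightarrow> complex) \<Rightarrow> (real^'n \<Rightarrow> complex)"
    and \<mu> :: "real^'n \<Rightarrow> real"
    and M :: nat and \<phi> :: "nat \<Rightarrow> real^'n \<Rightarrow> complex" and lam :: "nat \<Rightarrow> real"
    and \<alpha> :: "nat \<Rightarrow> complex" and \<epsilon> c :: real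
    and \<Psi> :: "real \<Rightarrow> real^'n \<Rightarrow> complex"
  assumes dim: "CARD('n) \<ge> 2"
    and V_decay: "decay_A V"
    and V_regular: "zero_regular V"
    and U_prop: "is_propagator V U"
    and mu_meas: "\<mu> \<in> borel_measurable lborel"
    and mu_Lp: "\<exists>p. 2 \<le> p \<and> p < 2 * real CARD('n) \<and> Lp_fun p \<mu>"
    and mu_Linf: "Linf_fun \<mu>"
    and eig: "\<And>j. j \<le> M \<Longrightarrow> is_eigenfunction U (lam j) (\<phi> j)"
    and orth: "\<And>j k. j \<le> M \<Longrightarrow> k \<le> M \<Longrightarrow> l2_inner (\<phi> j) (\<phi> k) = (if j = k then 1 else 0)"
    and span: "\<And>l \<psi>. is_eigenfunction U l \<psi> \<Longrightarrow>
                 \<exists>a::nat \<Rightarrow> complex. l2_norm (\<lambda>x. \<psi> x - (\<Sum>j\<le>M. a j * \<phi> j x)) = 0"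
    and Psi0_norm: "l2_norm (\<lambda>x. \<Sum>j\<le>M. \<alpha> j * \<phi> j x) = 1"
    and alpha0: "\<alpha> 0 \<noteq> 0"
    and lam_distinct: "\<And>j k. j \<le> M \<Longrightarrow> k \<le> M \<Longrightarrow> j \<noteq> k \<Longrightarrow> lam j \<noteq> lam k"
    and lam_nondeg: "\<And>j1 k1 j2 k2. j1 \<le> M \<Longrightarrow> k1 \<le> M \<Longrightarrow> j2 \<le> M \<Longrightarrow> k2 \<le> M \<Longrightarrow>
                 j1 \<noteq> k1 \<Longrightarrow> j2 \<noteq> k2 \<Longrightarrow> (j1, k1) \<noteq> (j2, k2) \<Longrightarrow>
                 lam j1 - lam k1 \<noteq> lam j2 - lam k2"
    and coupling: "\<And>j k. j \<le> M \<Longrightarrow> k \<le> M \<Longrightarrow> j \<noteq> k \<Longrightarrow>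
                 l2_inner (\<lambda>x. complex_of_real (\<mu> x) * \<phi> j x) (\<phi> k) \<noteq> 0"
    and eps_pos: "\<epsilon> > 0" and c_pos: "c > 0"
    and sol: "weak_solution U (u_ctrl c \<epsilon> M \<phi> \<mu>) \<mu> (\<lambda>x. \<Sum>j\<le>M. \<alpha> j * \<phi> j x) \<Psi>"
  shows "\<exists>tn :: nat \<Rightarrow> real. \<exists>\<Psi>inf :: real^'n \<Rightarrow> complex.
           (\<forall>n. 0 \<le> tn n) \<and> incseq tn \<and> filterlim tn at_top sequentially \<and>
           L2 \<Psi>inf \<and> l2_norm \<Psi>inf \<le> 1 \<and>
           (\<forall>g. L2 g \<longrightarrow> (\<lambda>n. l2_inner (\<Psi> (tn n)) g) \<longlonglongrightarrow> l2_inner \<Psi>inf g) \<and>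
           (\<lambda>n. l2_norm (\<lambda>x. P_disc M \<phi> (\<Psi> (tn n)) x - P_disc M \<phi> \<Psi>inf x)) \<longlonglongrightarrow> 0"
proof -
  have solL: "\<And>t. t \<ge> 0 \<Longrightarrow> L2 (\<Psi> t) \<and> l2_norm (\<Psi> t) = 1"
    using sol unfolding weak_solution_def by blast
  define x where "x m = \<Psi> (real m)" for m
  have xL: "L2 (x m)" and xN: "l2_norm (x m) = 1" for m
    using solL[of "real m"] by (simp_all add: x_def)
  interpret GS x by unfold_locales (rule xL)
  define c where "c n k = l2_inner (x n) (e k)" for n k
  have cB: "(\<Sum>k\<le>K. (cmod (c n k))\<^sup>2) \<le> 1" for n K
    using bessel[of "{..K}" "x n"] xL[of n] xN[of n] by (simp add: c_def)
  have cb: "cmod (c n k) \<le> 1" for n k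
  proof -
    have "(cmod (c n k))\<^sup>2 \<le> 1" using bessel[of "{k}" "x n"] xL[of n] xN[of n] by (simp add: c_def)
    thus ?thesis by (simp add: abs_square_le_1)
  qed
  interpret D: subseqs "\<lambda>k s. convergent (\<lambda>i. c (s i) k)"
  proof
    fix k and s :: "nat \<Rightarrow> nat" assume "strict_mono s"
    have "bounded (range (\<lambda>i. c (s i) k))"
      using cb by (auto simp: bounded_iff)
    then obtain l r' where "strict_mono r'" "((\<lambda>i. c (s i) k) \<circ> r') \<longlonglongrightarrow> l"
      using bounded_imp_convergent_subsequence by blast
    thus "\<exists>r'. strict_mono r' \<and> convergent (\<lambda>i. c ((s \<circ> r') i) k)"
      by (auto simp: convergent_def o_def)
  qed
  define r where "r = D.diagseq"
  have r_mono: "strict_mono r" unfolding r_def by (rule D.subseq_diagseq)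
  have convk: "convergent (\<lambda>i. c (r i) k)" for k
  proof -
    have "convergent (\<lambda>i. c ((D.diagseq \<circ> (+) (Suc k)) i) k)"
    proof (rule D.diagseq_holds)
      fix r' s :: "nat \<Rightarrow> nat" and n assume "strict_mono r'" "convergent (\<lambda>i. c (s i) n)"
      thus "convergent (\<lambda>i. c ((s \<circ> r') i) n)"
        unfolding convergent_def o_def using LIMSEQ_subseq_LIMSEQ[of "\<lambda>i. c (s i) n" _ r']
        by (auto simp: o_def)
    qed
    hence "convergent (\<lambda>i. c (D.diagseq (i + Suc k)) k)" by (simp add: o_def add.commute)
    thus ?thesis unfolding r_def by (rule convergent_ignore_initial_segment[THEN iffD1])
  qed
  define b where "b k = lim (\<lambda>i. c (r i) k)" for k
  have conv: "(\<lambda>i. c (r i) k) \<longlonglongrightarrow> b k" for k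
    using convk[of k] by (simp add: b_def convergent_LIMSEQ_iff)
  have bB: "(\<Sum>k\<le>K. (cmod (b k))\<^sup>2) \<le> 1" for K
  proof (rule LIMSEQ_le_const2)
    show "(\<lambda>n. \<Sum>k\<le>K. (cmod (c (r n) k))\<^sup>2) \<longlonglongrightarrow> (\<Sum>k\<le>K. (cmod (b k))\<^sup>2)"
      by (intro tendsto_intros conv)
  qed (use cB in auto)
  define SK where "SK K = (\<lambda>z. \<Sum>k\<le>K. b k * e k z)" for K
  have SL: "L2 (SK K)" for K unfolding SK_def by (intro L2_sum L2_cmult e_L2) auto
  have Sdiff: "l2_norm (\<lambda>z. SK i z - SK j z) < \<epsilon>"
    if N: "\<forall>j\<ge>N. \<forall>i. (\<Sum>k\<in>{j<..i}. (cmod (b k))\<^sup>2) < \<epsilon>\<^sup>2" and "j \<ge> N" "j \<le> i" and \<epsilon>: "\<epsilon> > 0" for i j N \<epsilon>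
  proof -
    have eq: "(\<lambda>z. SK i z - SK j z) = (\<lambda>z. \<Sum>k\<in>{j<..i}. b k * e k z)"
      unfolding SK_def using \<open>j \<le> i\<close> by (simp add: sum_split_ivl[of j i])
    have "(l2_norm (\<lambda>z. SK i z - SK j z))\<^sup>2 \<le> (\<Sum>k\<in>{j<..i}. (cmod (b k))\<^sup>2)"
      unfolding eq by (rule norm_sum_e) simp
    also have "\<dots> < \<epsilon>\<^sup>2" using N \<open>j \<ge> N\<close> by blast
    finally show ?thesis
      using \<epsilon> by (simp add: power_less_imp_less_base)
  qed
  have "\<exists>y. L2 y \<and> (\<lambda>i. l2_norm (\<lambda>z. SK i z - y z)) \<longlonglongrightarrow> 0"
  proof (rule L2_complete[OF SL])
    fix \<epsilon> :: real assume \<epsilon>: "\<epsilon> > 0"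
    obtain N where N: "\<forall>j\<ge>N. \<forall>i. (\<Sum>k\<in>{j<..i}. (cmod (b k))\<^sup>2) < \<epsilon>\<^sup>2"
      using sq_tail[OF bB, of "\<epsilon>\<^sup>2"] \<epsilon> by auto
    show "\<exists>N. \<forall>i\<ge>N. \<forall>j\<ge>N. l2_norm (\<lambda>z. SK i z - SK j z) < \<epsilon>"
    proof (intro exI allI impI)
      fix i j assume ij: "i \<ge> N" "j \<ge> N"
      show "l2_norm (\<lambda>z. SK i z - SK j z) < \<epsilon>"
      proof (cases "j \<le> i")
        case True then show ?thesis using Sdiff[OF N ij(2) True \<epsilon>] by simp
      next
        case False
        hence "l2_norm (\<lambda>z. SK j z - SK i z) < \<epsilon>" using Sdiff[OF N ij(1) _ \<epsilon>] by simp
        then show ?thesis using l2_norm_commute[of "SK i" "SK j"] by simp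
      qed
    qed
  qed
  then obtain y where yL: "L2 y" and Sy: "(\<lambda>i. l2_norm (\<lambda>z. SK i z - y z)) \<longlonglongrightarrow> 0" by blast
  have inner_lim: "(\<lambda>K. \<Sum>k\<le>K. b k * cnj (l2_inner g (e k))) \<longlonglongrightarrow> l2_inner y g" if gL: "L2 g" for g
  proof -
    have eqK: "l2_inner (SK K) g = (\<Sum>k\<le>K. b k * cnj (l2_inner g (e k)))" for K
      unfolding SK_def by (subst l2_inner_sum_left) (auto intro: e_L2 gL simp: l2_inner_cnj)
    have "(\<lambda>K. l2_inner (SK K) g - l2_inner y g) \<longlonglongrightarrow> 0"
    proof (rule Lim_null_comparison)
      show "eventually (\<lambda>K. norm (l2_inner (SK K) g - l2_inner y g) \<le> l2_norm (\<lambda>z. SK K z - y z) * l2_norm g) sequentially"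
      proof (rule always_eventually, rule allI)
        fix K
        have "l2_inner (SK K) g - l2_inner y g = l2_inner (\<lambda>z. SK K z - y z) g"
          by (rule l2_inner_diff_left[symmetric, OF SL yL gL])
        also have "cmod \<dots> \<le> l2_norm (\<lambda>z. SK K z - y z) * l2_norm g"
          by (rule inner_CS[OF L2_diff[OF SL yL] gL])
        finally show "norm (l2_inner (SK K) g - l2_inner y g) \<le> l2_norm (\<lambda>z. SK K z - y z) * l2_norm g" by simp
      qed
      show "(\<lambda>K. l2_norm (\<lambda>z. SK K z - y z) * l2_norm g) \<longlonglongrightarrow> 0"
        using tendsto_mult_left_zero[OF Sy] by simp
    qed
    hence "(\<lambda>K. l2_inner (SK K) g) \<longlonglongrightarrow> l2_inner y g" by (simp add: LIM_zero_iff)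
    thus ?thesis unfolding eqK .
  qed
  have weak: "(\<lambda>n. l2_inner (x (r n)) g) \<longlonglongrightarrow> l2_inner y g" if gL: "L2 g" for g
  proof -
    have rep: "l2_inner (x m) g = (\<Sum>k\<le>m. c m k * cnj (l2_inner g (e k)))" for m
    proof -
      let ?p = "\<lambda>z. \<Sum>j\<le>m. l2_inner (x m) (e j) * e j z"
      have pL: "L2 ?p" by (intro L2_sum L2_cmult e_L2) auto
      have "l2_inner (x m) g - l2_inner ?p g = l2_inner (\<lambda>z. x m z - ?p z) g"
        by (rule l2_inner_diff_left[symmetric, OF xL pL gL])
      also have "\<dots> = 0" by (rule l2_norm_zero_inner[OF L2_diff[OF xL pL] gL recon])
      finally have "l2_inner (x m) g = l2_inner ?p g" by simp
      also have "\<dots> = (\<Sum>k\<le>m. c m k * cnj (l2_inner g (e k)))"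
        by (subst l2_inner_sum_left) (auto intro: e_L2 gL simp: l2_inner_cnj c_def)
      finally show ?thesis .
    qed
    have "(\<lambda>n. \<Sum>k\<le>r n. c (r n) k * cnj (l2_inner g (e k))) \<longlonglongrightarrow> l2_inner y g"
    proof (rule seq_lemma)
      show "(\<Sum>k\<le>K. (cmod (c (r n) k))\<^sup>2) \<le> 1" for n K by (rule cB)
      show "(\<Sum>k\<le>K. (cmod (l2_inner g (e k)))\<^sup>2) \<le> (l2_norm g)\<^sup>2" for K by (rule bessel[OF _ gL]) simp
      show "(\<lambda>n. c (r n) k) \<longlonglongrightarrow> b k" for k by (rule conv)
      show "filterlim r at_top sequentially" by (rule filterlim_subseq[OF r_mono])
      show "(\<lambda>K. \<Sum>k\<le>K. b k * cnj (l2_inner g (e k))) \<longlonglongrightarrow> l2_inner y g" by (rule inner_lim[OF gL])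
    qed
    thus ?thesis by (simp add: rep)
  qed
  have ynorm: "l2_norm y \<le> 1"
  proof (rule LIMSEQ_le_const)
    show "(\<lambda>K. 1 + l2_norm (\<lambda>z. SK K z - y z)) \<longlonglongrightarrow> 1"
      using tendsto_add[OF tendsto_const[of 1] Sy] by simp
    show "\<exists>N. \<forall>K\<ge>N. l2_norm y \<le> 1 + l2_norm (\<lambda>z. SK K z - y z)"
    proof (intro exI allI impI)
      fix K :: nat
      have "(l2_norm (SK K))\<^sup>2 \<le> 1"
        using norm_sum_e[of "{..K}" b] bB[of K] unfolding SK_def by simp
      hence S1: "l2_norm (SK K) \<le> 1" by (simp add: power_le_one_iff l2_norm_nonneg abs_square_le_1)
      have "l2_norm y = l2_norm (\<lambda>z. SK K z + (y z - SK K z))" by simp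
      also have "\<dots> \<le> l2_norm (SK K) + l2_norm (\<lambda>z. y z - SK K z)"
        by (rule l2_norm_triangle[OF SL L2_diff[OF yL SL]])
      also have "\<dots> \<le> 1 + l2_norm (\<lambda>z. SK K z - y z)"
        using S1 l2_norm_commute[of y "SK K"] by simp
      finally show "l2_norm y \<le> 1 + l2_norm (\<lambda>z. SK K z - y z)" .
    qed
  qed
  define tn where "tn i = real (r i)" for i
  have tn_inc: "incseq tn"
    unfolding tn_def incseq_def using strict_mono_mono[OF r_mono] by (auto simp: mono_def)
  have tn_lim: "filterlim tn at_top sequentially"
    unfolding tn_def
    by (rule filterlim_compose[OF filterlim_real_sequentially filterlim_subseq[OF r_mono]])
  have Psi_tn: "\<Psi> (tn n) = x (r n)" for n by (simp add: tn_def x_def)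
  have weak': "\<forall>g. L2 g \<longrightarrow> (\<lambda>n. l2_inner (\<Psi> (tn n)) g) \<longlonglongrightarrow> l2_inner y g"
    using weak by (simp add: Psi_tn)
  have phiL: "L2 (\<phi> j)" if "j \<le> M" for j using eig[OF that] by (simp add: is_eigenfunction_def)
  have Pd: "(\<lambda>n. l2_norm (\<lambda>z. P_disc M \<phi> (\<Psi> (tn n)) z - P_disc M \<phi> y z)) \<longlonglongrightarrow> 0"
  proof (rule Lim_null_comparison)
    define d where "d n j = l2_inner (\<Psi> (tn n)) (\<phi> j) - l2_inner y (\<phi> j)" for n j
    have eqP: "(\<lambda>z. P_disc M \<phi> (\<Psi> (tn n)) z - P_disc M \<phi> y z) = (\<lambda>z. \<Sum>j\<le>M. d n j * \<phi> j z)" for n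
      unfolding P_disc_def d_def by (rule ext) (simp add: sum_subtractf left_diff_distrib)
    show "eventually (\<lambda>n. norm (l2_norm (\<lambda>z. P_disc M \<phi> (\<Psi> (tn n)) z - P_disc M \<phi> y z))
            \<le> (\<Sum>j\<le>M. cmod (d n j) * l2_norm (\<phi> j))) sequentially"
    proof (rule always_eventually, rule allI)
      fix n
      have "l2_norm (\<lambda>z. \<Sum>j\<le>M. d n j * \<phi> j z) \<le> (\<Sum>j\<le>M. l2_norm (\<lambda>z. d n j * \<phi> j z))"
        by (rule l2_norm_sum) (auto intro: L2_cmult phiL)
      thus "norm (l2_norm (\<lambda>z. P_disc M \<phi> (\<Psi> (tn n)) z - P_disc M \<phi> y z))
            \<le> (\<Sum>j\<le>M. cmod (d n j) * l2_norm (\<phi> j))"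
        by (simp add: eqP l2_norm_cmult l2_norm_nonneg)
    qed
    have "(\<lambda>n. d n j) \<longlonglongrightarrow> 0" if "j \<le> M" for j
      unfolding d_def using weak'[rule_format, OF phiL[OF that]]
      by (simp add: LIM_zero)
    thus "(\<lambda>n. \<Sum>j\<le>M. cmod (d n j) * l2_norm (\<phi> j)) \<longlonglongrightarrow> 0"
      using tendsto_null_sum[of "{..M}" "\<lambda>j n. cmod (d n j) * l2_norm (\<phi> j)"]
      by (auto intro!: tendsto_null_sum tendsto_mult_left_zero tendsto_norm_zero)
  qed
  show ?thesis
    apply (rule exI[of _ tn], rule exI[of _ y])
    using tn_inc tn_lim yL ynorm weak' Pd by (simp add: tn_def)
qed


end
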